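(* If $G$ is a graph with minimum degree $\delta(G)\ge 2$, then $\Gamma_{\rm cer}(G)\le\Gamma(G)$.
   Context: All graphs are finite and simple; $\delta(G)$ is the minimum degree. A set $D\subseteq V_G$ is a dominating set of $G$ if every vertex of $V_G-D$ has a neighbor in $D$; $\Gamma(G)$ is the maximum cardinality of a minimal (with respect to inclusion) dominating set. A set $D$ is a certified dominating set of $G$ if $D$ is dominating and every vertex of $D$ has either zero or at least two neighbors in $V_G-D$; $\Gamma_{\rm cer}(G)$ is the maximum cardinality of a minimal (with respect to inclusion) certified dominating set. *)

theory Defs
  imports Main
begin

definition simple_graph :: "'a set \<Rightarrow> ('a \<Rightarrow> 'a \<Rightarrow> bool) \<Rightarrow> bool" where
  "simple_graph V E \<longleftrightarrow> finite V \<and> (\<forall>u v. E u v \<longrightarrow> u \<in> V \<and> v \<in> V)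
     \<and> (\<forall>u v. E u v \<longrightarrow> E v u) \<and> (\<forall>v. \<not> E v v)"

definition neighbors :: "'a set \<Rightarrow> ('a \<Rightarrow> 'a \<Rightarrow> bool) \<Rightarrow> 'a \<Rightarrow> 'a set" where
  "neighbors V E v = {u \<in> V. E v u}"

definition degree :: "'a set \<Rightarrow> ('a \<Rightarrow> 'a \<Rightarrow> bool) \<Rightarrow> 'a \<Rightarrow> nat" where
  "degree V E v = card (neighbors V E v)"

definition min_degree :: "'a set \<Rightarrow> ('a \<Rightarrow> 'a \<Rightarrow> bool) \<Rightarrow> nat" where
  "min_degree V E = Min (degree V E ` V)"

definition dominating :: "'a set \<Rightarrow> ('a \<Rightarrow> 'a \<Rightarrow> bool) \<Rightarrow> 'a set \<Rightarrow> bool" where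
  "dominating V E D \<longleftrightarrow> D \<subseteq> V \<and> (\<forall>v \<in> V - D. \<exists>u \<in> D. E v u)"

definition certified_dominating :: "'a set \<Rightarrow> ('a \<Rightarrow> 'a \<Rightarrow> bool) \<Rightarrow> 'a set \<Rightarrow> bool" where
  "certified_dominating V E D \<longleftrightarrow> dominating V E D \<and>
     (\<forall>v \<in> D. card (neighbors V E v \<inter> (V - D)) = 0 \<or> card (neighbors V E v \<inter> (V - D)) \<ge> 2)"

definition minimal_wrt :: "('a set \<Rightarrow> bool) \<Rightarrow> 'a set \<Rightarrow> bool" where
  "minimal_wrt P D \<longleftrightarrow> P D \<and> (\<forall>D'. D' \<subset> D \<longrightarrow> \<not> P D')"

definition upper_domination :: "'a set \<Rightarrow> ('a \<Rightarrow> 'a \<Rightarrow> bool) \<Rightarrow> nat" where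
  "upper_domination V E = Max (card ` {D. minimal_wrt (dominating V E) D})"

definition upper_cert_domination :: "'a set \<Rightarrow> ('a \<Rightarrow> 'a \<Rightarrow> bool) \<Rightarrow> nat" where
  "upper_cert_domination V E = Max (card ` {D. minimal_wrt (certified_dominating V E) D})"

end

theory Submission
  imports Defs
begin

lemma sg_facts:
  assumes "simple_graph V E"
  shows "finite V" "E u v \<Longrightarrow> u \<in> V" "E u v \<Longrightarrow> v \<in> V" "E u v \<Longrightarrow> E v u" "\<not> E v v"
  using assms unfolding simple_graph_def by blast+

lemma fin_nb: "simple_graph V E \<Longrightarrow> finite (neighbors V E v \<inter> S)"
  unfolding neighbors_def using sg_facts(1)[of V E] by auto

lemma cert_remove:
  assumes sg: "simple_graph V E" and cD: "certified_dominating V E D" and XD: "X \<subseteq> D"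
    and dom: "dominating V E (D - X)"
    and cnt: "\<forall>y\<in>D-X. card (neighbors V E y \<inter> (V - D)) = 0 \<longrightarrow> card (neighbors V E y \<inter> X) \<noteq> 1"
  shows "certified_dominating V E (D - X)"
  unfolding certified_dominating_def
proof (intro conjI dom ballI)
  fix y assume y: "y \<in> D - X"
  have DV: "D \<subseteq> V" using cD unfolding certified_dominating_def dominating_def by auto
  have eq: "neighbors V E y \<inter> (V - (D - X)) = (neighbors V E y \<inter> (V - D)) \<union> (neighbors V E y \<inter> X)"
    using XD DV by auto
  have old: "card (neighbors V E y \<inter> (V - D)) = 0 \<or> card (neighbors V E y \<inter> (V - D)) \<ge> 2"
    using cD y unfolding certified_dominating_def by auto
  show "card (neighbors V E y \<inter> (V - (D - X))) = 0 \<or> 2 \<le> card (neighbors V E y \<inter> (V - (D - X)))"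
  proof (cases "card (neighbors V E y \<inter> (V - D)) = 0")
    case True
    then have "neighbors V E y \<inter> (V - D) = {}" using fin_nb[OF sg] by auto
    then have "neighbors V E y \<inter> (V - (D - X)) = neighbors V E y \<inter> X" using eq by auto
    moreover have "card (neighbors V E y \<inter> X) \<noteq> 1" using cnt y True by auto
    ultimately show ?thesis by auto
  next
    case False
    then have "card (neighbors V E y \<inter> (V - D)) \<ge> 2" using old by auto
    moreover have "card (neighbors V E y \<inter> (V - D)) \<le> card (neighbors V E y \<inter> (V - (D - X)))"
      by (rule card_mono[OF fin_nb[OF sg]]) (use eq in auto)
    ultimately show ?thesis by auto
  qed
qed

lemma deg2:
  assumes sg: "simple_graph V E" and "V \<noteq> {}" and md: "min_degree V E \<ge> 2" and v: "v \<in> V"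
  shows "card (neighbors V E v) \<ge> 2"
proof -
  have "Min (degree V E ` V) \<le> degree V E v"
    using sg_facts(1)[OF sg] v by (intro Min_le) auto
  then show ?thesis using md unfolding min_degree_def degree_def by auto
qed

lemma mincert_mindom:
  assumes sg: "simple_graph V E" and ne: "V \<noteq> {}" and md: "min_degree V E \<ge> 2"
    and mc: "minimal_wrt (certified_dominating V E) D"
  shows "minimal_wrt (dominating V E) D"
proof -
  have cD: "certified_dominating V E D" using mc unfolding minimal_wrt_def by auto
  have dD: "dominating V E D" using cD unfolding certified_dominating_def by auto
  have DV: "D \<subseteq> V" using dD unfolding dominating_def by auto
  have nosub: "\<And>D'. D' \<subset> D \<Longrightarrow> \<not> certified_dominating V E D'" using mc unfolding minimal_wrt_def by auto
  define A where "A = {a \<in> D. neighbors V E a \<inter> (V - D) = {}}"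
  have Aempty: "A = {}"
  proof (rule ccontr)
    assume Ane: "A \<noteq> {}"
    define P where "P = (\<lambda>X. X \<subseteq> A \<and> X \<noteq> {} \<and> (\<forall>y\<in>A-X. card (neighbors V E y \<inter> X) \<noteq> 1))"
    have PA: "P A" unfolding P_def using Ane by auto
    obtain X where PX: "P X" and Xmin: "\<And>Y. P Y \<Longrightarrow> card X \<le> card Y"
      using ex_has_least_nat[of P A card] PA by blast
    have XA: "X \<subseteq> A" and Xne: "X \<noteq> {}" and Xc: "\<forall>y\<in>A-X. card (neighbors V E y \<inter> X) \<noteq> 1"
      using PX unfolding P_def by auto
    have finA: "finite A" using DV sg_facts(1)[OF sg] unfolding A_def by (auto intro: finite_subset)
    have finX: "finite X" using XA finA by (auto intro: finite_subset)
    have XD: "X \<subseteq> D" using XA unfolding A_def by auto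
    have Xi: "\<forall>x\<in>X. \<exists>u\<in>D-X. E x u"
    proof
      fix x assume x: "x \<in> X"
      show "\<exists>u\<in>D-X. E x u"
      proof (rule ccontr)
        assume "\<not> (\<exists>u\<in>D-X. E x u)"
        then have nbX: "neighbors V E x \<subseteq> X"
          using x XA unfolding A_def neighbors_def by auto
        have xV: "x \<in> V" using x XD DV by auto
        have c2: "card (neighbors V E x) \<ge> 2" using deg2[OF sg ne md xV] .
        have "P (X - {x})"
          unfolding P_def
        proof (intro conjI ballI)
          show "X - {x} \<subseteq> A" using XA by auto
          show "X - {x} \<noteq> {}"
          proof
            assume "X - {x} = {}"
            then have "neighbors V E x \<subseteq> {x}" using nbX by auto
            moreover have "x \<notin> neighbors V E x" using sg_facts(5)[OF sg] unfolding neighbors_def by auto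
            ultimately have "neighbors V E x = {}" by auto
            then show False using c2 by auto
          qed
          fix y assume y: "y \<in> A - (X - {x})"
          show "card (neighbors V E y \<inter> (X - {x})) \<noteq> 1"
          proof (cases "y = x")
            case True
            have "neighbors V E x \<inter> (X - {x}) = neighbors V E x"
              using nbX sg_facts(5)[OF sg] unfolding neighbors_def by auto
            then show ?thesis using True c2 by auto
          next
            case False
            then have yAX: "y \<in> A - X" using y by auto
            have "\<not> E y x"
            proof
              assume "E y x"
              then have "E x y" using sg_facts(4)[OF sg] by auto
              then have "y \<in> neighbors V E x" using sg_facts(3)[OF sg] unfolding neighbors_def by auto
              then show False using nbX yAX by auto
            qed
            then have "neighbors V E y \<inter> (X - {x}) = neighbors V E y \<inter> X"
              unfolding neighbors_def by auto
            then show ?thesis using Xc yAX by auto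
          qed
        qed
        then have "card X \<le> card (X - {x})" using Xmin by auto
        moreover have "card (X - {x}) < card X" using finX x by (meson card_Diff1_less)
        ultimately show False by auto
      qed
    qed
    have domX: "dominating V E (D - X)"
      unfolding dominating_def
    proof (intro conjI ballI)
      show "D - X \<subseteq> V" using DV by auto
      fix w assume w: "w \<in> V - (D - X)"
      show "\<exists>u\<in>D - X. E w u"
      proof (cases "w \<in> X")
        case True then show ?thesis using Xi by auto
      next
        case False
        then have "w \<in> V - D" using w by auto
        then obtain u where u: "u \<in> D" "E w u" using dD unfolding dominating_def by auto
        have "u \<notin> X"
        proof
          assume "u \<in> X"
          then have "u \<in> A" using XA by auto
          moreover have "w \<in> neighbors V E u \<inter> (V - D)"
            using u \<open>w \<in> V - D\<close> sg_facts(4)[OF sg] unfolding neighbors_def by auto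
          ultimately show False unfolding A_def by auto
        qed
        then show ?thesis using u by auto
      qed
    qed
    have "certified_dominating V E (D - X)"
    proof (rule cert_remove[OF sg cD XD domX], intro ballI impI)
      fix y assume y: "y \<in> D - X" and c0: "card (neighbors V E y \<inter> (V - D)) = 0"
      then have "neighbors V E y \<inter> (V - D) = {}" using fin_nb[OF sg] by auto
      then have "y \<in> A - X" using y unfolding A_def by auto
      then show "card (neighbors V E y \<inter> X) \<noteq> 1" using Xc by auto
    qed
    moreover have "D - X \<subset> D" using XD Xne by auto
    ultimately show False using nosub by auto
  qed
  show ?thesis
    unfolding minimal_wrt_def
  proof (intro conjI dD allI impI)
    fix D'' assume sub: "D'' \<subset> D"
    show "\<not> dominating V E D''"
    proof
      assume dD'': "dominating V E D''"
      obtain v where v: "v \<in> D" "v \<notin> D''" using sub by auto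
      have dom1: "dominating V E (D - {v})"
        using dD'' sub v DV unfolding dominating_def by blast
      have "certified_dominating V E (D - {v})"
      proof (rule cert_remove[OF sg cD _ dom1], use v in simp, intro ballI impI)
        fix y assume y: "y \<in> D - {v}" and c0: "card (neighbors V E y \<inter> (V - D)) = 0"
        then have "neighbors V E y \<inter> (V - D) = {}" using fin_nb[OF sg] by auto
        then have "y \<in> A" using y unfolding A_def by auto
        then show "card (neighbors V E y \<inter> {v}) \<noteq> 1" using Aempty by auto
      qed
      moreover have "D - {v} \<subset> D" using v by auto
      ultimately show False using nosub by auto
    qed
  qed
qed

theorem lemma3p4:
  fixes V :: "'a set" and E :: "'a \<Rightarrow> 'a \<Rightarrow> bool"
  assumes "simple_graph V E"
    and "V \<noteq> {}"
    and "min_degree V E \<ge> 2"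
  shows "upper_cert_domination V E \<le> upper_domination V E"
proof -
  have finV: "finite V" using sg_facts(1)[OF assms(1)] .
  have cV: "certified_dominating V E V"
    unfolding certified_dominating_def dominating_def by auto
  obtain D where D: "certified_dominating V E D" and Dmin: "\<And>D'. certified_dominating V E D' \<Longrightarrow> card D \<le> card D'"
    using ex_has_least_nat[of "certified_dominating V E" V card] cV by blast
  have DV: "D \<subseteq> V" using D unfolding certified_dominating_def dominating_def by auto
  have "minimal_wrt (certified_dominating V E) D"
    unfolding minimal_wrt_def
  proof (intro conjI D allI impI notI)
    fix D' assume "D' \<subset> D" "certified_dominating V E D'"
    then show False using Dmin[of D'] psubset_card_mono[of D D'] DV finV
      by (meson finite_subset leD)
  qed
  then have ne: "card ` {D. minimal_wrt (certified_dominating V E) D} \<noteq> {}" by auto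
  have sub: "card ` {D. minimal_wrt (certified_dominating V E) D} \<subseteq> card ` {D. minimal_wrt (dominating V E) D}"
    using mincert_mindom[OF assms] by auto
  have "{D. minimal_wrt (dominating V E) D} \<subseteq> Pow V"
    unfolding minimal_wrt_def dominating_def by auto
  then have fin: "finite (card ` {D. minimal_wrt (dominating V E) D})"
    using finV by (meson finite_Pow_iff finite_imageI finite_subset)
  show ?thesis unfolding upper_cert_domination_def upper_domination_def
    by (rule Max_mono[OF sub ne fin])
qed

end
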